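(* Let $s_\theta$ be the Sturmian word of irrational slope $\theta\in(0,1)$, let $1\le k\le m$, let $P_k=(p_1,\dots,p_k)$ be an ordered partition of $m$, and let $s_0=0$, $s_\ell=p_1+\dots+p_\ell$ ($1\le\ell\le k$). Let $0=q'_0<q'_1<\dots<q'_k$ be the $k+1$ points $\{-s_0\theta\},\{-s_1\theta\},\dots,\{-s_k\theta\}$ arranged in increasing order, and set $q'_{k+1}=1$. Let $\lambda_0,\dots,\lambda_k$ be the $k+1$ varieties of $\mathcal{L}_{(m,k)}$ listed in the order inherited from the lexicographic order of the underlying factors. Then for each $0\le j\le k$, a factor $u\in\mathcal{L}_m$ belongs (as a partitioned factor) to $\lambda_j$ if and only if $J_u\subseteq[q'_j,q'_{j+1})$; equivalently, the occurrence of a length-$m$ factor at position $n$ is of variety $\lambda_j$ iff $\{n\theta\}\in[q'_j,q'_{j+1})$. Consequently $Fr(\lambda_j)=q'_{j+1}-q'_j$.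
   Context: For irrational $\theta\in(0,1)$, $s_\theta=s_0s_1\cdots$ is the infinite word over $\{a<b\}$ with $s_n=a$ if $\{n\theta\}\in I_a=[0,1-\theta)$ and $s_n=b$ if $\{n\theta\}\in I_b=[1-\theta,1)$, $\{x\}$ the fractional part. $\mathcal{L}_m$ is the set of factors of length $m$. $\mathcal{L}_{(m,k)}$ is the set of factorizations $u=u_1\cdots u_k$, $|u_i|=p_i$, $u\in\mathcal{L}_m$; the height profile is $\langle|u_1|_b,\dots,|u_k|_b\rangle$, and varieties are classes of equal height profile; each variety consists of lexicographically consecutive factors, which gives the inherited order. $R(x)=\{x+\theta\}$ on the circle $[0,1)$; for a factor $u=r_0\cdots r_{m-1}$, $J_u=\bigcap_{i=0}^{m-1}R^{-i}(I_{r_i})$ ($I_r=I_a$ or $I_b$ as $r=a$ or $b$), and $u$ occurs at position $n$ iff $\{n\theta\}\in J_u$. The frequency of a variety is $Fr(\lambda)=\lim_{N\to\infty}\mu_N/N$, where $\mu_N$ is the number of occurrences in the length-$N$ prefix of $s_\theta$ of length-$m$ factors whose $P_k$-partitioned form belongs to $\lambda$. *)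

theory Defs
  imports Complex_Main
begin

text \<open>Letters: False = a, True = b (so a < b as booleans).\<close>

definition I_b :: "real \<Rightarrow> real set" where
  "I_b \<theta> = {1 - \<theta>..<1}"

definition I_a :: "real \<Rightarrow> real set" where
  "I_a \<theta> = {0..<1 - \<theta>}"

definition I_letter :: "real \<Rightarrow> bool \<Rightarrow> real set" where
  "I_letter \<theta> r = (if r then I_b \<theta> else I_a \<theta>)"

definition sturm :: "real \<Rightarrow> nat \<Rightarrow> bool" where
  "sturm \<theta> n = (frac (real n * \<theta>) \<in> I_b \<theta>)"

definition factor_at :: "real \<Rightarrow> nat \<Rightarrow> nat \<Rightarrow> bool list" where
  "factor_at \<theta> m n = map (sturm \<theta>) [n..<n + m]"

definition Lang :: "real \<Rightarrow> nat \<Rightarrow> bool list set" where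
  "Lang \<theta> m = {factor_at \<theta> m n | n. True}"

definition height :: "bool list \<Rightarrow> nat" where
  "height u = length (filter id u)"

definition psum :: "nat list \<Rightarrow> nat \<Rightarrow> nat" where
  "psum P l = sum_list (take l P)"

definition block :: "nat list \<Rightarrow> bool list \<Rightarrow> nat \<Rightarrow> bool list" where
  "block P u l = take (P ! l) (drop (psum P l) u)"

definition height_profile :: "nat list \<Rightarrow> bool list \<Rightarrow> nat list" where
  "height_profile P u = map (\<lambda>l. height (block P u l)) [0..<length P]"

definition varieties :: "real \<Rightarrow> nat \<Rightarrow> nat list \<Rightarrow> bool list set set" where
  "varieties \<theta> m P =
     {{u \<in> Lang \<theta> m. height_profile P u = h} | h. h \<in> height_profile P ` Lang \<theta> m}"

definition lex_less :: "bool list \<Rightarrow> bool list \<Rightarrow> bool" where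
  "lex_less u w = ((u, w) \<in> lexord {(x, y). x < y})"

definition Rot :: "real \<Rightarrow> nat \<Rightarrow> real \<Rightarrow> real" where
  "Rot \<theta> i x = frac (x + real i * \<theta>)"

definition J :: "real \<Rightarrow> bool list \<Rightarrow> real set" where
  "J \<theta> u = {x \<in> {0..<1}. \<forall>i < length u. Rot \<theta> i x \<in> I_letter \<theta> (u ! i)}"

definition qpts :: "real \<Rightarrow> nat list \<Rightarrow> nat \<Rightarrow> real" where
  "qpts \<theta> P j =
     (let Q = sorted_list_of_set {frac (- real (psum P l) * \<theta>) | l. l \<le> length P}
      in if j < length Q then Q ! j else 1)"

definition occ_count :: "real \<Rightarrow> nat \<Rightarrow> bool list set \<Rightarrow> nat \<Rightarrow> nat" where
  "occ_count \<theta> m V N = card {n. n + m \<le> N \<and> factor_at \<theta> m n \<in> V}"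

end

theory Submission imports Defs begin

lemma floor_step:
  assumes "0 < \<theta>" "\<theta> < 1"
  shows "\<lfloor>y + \<theta>\<rfloor> = \<lfloor>y\<rfloor> + (if frac y \<in> I_b \<theta> then 1 else 0)"
proof -
  have e: "y + \<theta> = (frac y + \<theta>) + of_int \<lfloor>y\<rfloor>" by (simp add: frac_def)
  have "\<lfloor>y + \<theta>\<rfloor> = \<lfloor>frac y + \<theta>\<rfloor> + \<lfloor>y\<rfloor>" unfolding e by simp
  moreover have "\<lfloor>frac y + \<theta>\<rfloor> = (if frac y \<in> I_b \<theta> then 1 else 0)"
  proof (cases "frac y \<in> I_b \<theta>")
    case True
    then have "1 - \<theta> \<le> frac y" by (simp add: I_b_def)
    then show ?thesis using True frac_lt_1[of y] assms by (simp add: floor_eq_iff)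
  next
    case False
    then have "frac y < 1 - \<theta>" using frac_lt_1[of y] by (auto simp add: I_b_def)
    then show ?thesis using False frac_ge_0[of y] assms by (simp add: floor_eq_iff)
  qed
  ultimately show ?thesis by simp
qed

lemma height_snoc: "height (xs @ [b]) = height xs + (if b then 1 else 0)"
  by (simp add: height_def)

lemma height_tele:
  assumes "\<And>i. F (Suc i) = F i + (if f i then 1 else 0)" "a \<le> b"
  shows "int (height (map f [a..<b])) = F b - F a"
  using assms(2)
proof (induction b)
  case 0 then show ?case by (simp add: height_def)
next
  case (Suc b)
  show ?case
  proof (cases "a \<le> b")
    case True
    then show ?thesis using Suc assms(1)[of b] by (simp add: height_snoc)
  next
    case False
    then have "a = Suc b" using Suc by simp
    then show ?thesis by (simp add: height_def)
  qed
qed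

lemma mult_int_irr:
  assumes "\<theta> \<notin> \<rat>" "t > 0"
  shows "real t * \<theta> \<notin> \<int>"
proof
  assume "real t * \<theta> \<in> \<int>"
  then obtain z where "real t * \<theta> = of_int z" by (auto elim: Ints_cases)
  then have "\<theta> = of_int z / real t" using assms(2) by (simp add: field_simps)
  then have "\<theta> \<in> \<rat>" by simp
  with assms(1) show False by simp
qed

lemma floor_shift:
  assumes "\<theta> \<notin> \<rat>" "t > 0" "0 \<le> x" "x < 1"
  shows "\<lfloor>x + real t * \<theta>\<rfloor> = \<lfloor>real t * \<theta>\<rfloor> + (if frac (- (real t * \<theta>)) \<le> x then 1 else 0)"
proof -
  have ni: "real t * \<theta> \<notin> \<int>" using mult_int_irr assms by blast
  have fn: "frac (- (real t * \<theta>)) = 1 - frac (real t * \<theta>)" using ni by (simp add: frac_neg)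
  have e: "x + real t * \<theta> = (x + frac (real t * \<theta>)) + of_int \<lfloor>real t * \<theta>\<rfloor>" by (simp add: frac_def)
  have "\<lfloor>x + real t * \<theta>\<rfloor> = \<lfloor>x + frac (real t * \<theta>)\<rfloor> + \<lfloor>real t * \<theta>\<rfloor>" unfolding e by simp
  moreover have "\<lfloor>x + frac (real t * \<theta>)\<rfloor> = (if frac (- (real t * \<theta>)) \<le> x then 1 else 0)"
    unfolding fn using frac_lt_1[of "real t * \<theta>"] frac_ge_0[of "real t * \<theta>"] assms
    by (simp add: floor_eq_iff)
  ultimately show ?thesis by simp
qed

definition wd :: "real \<Rightarrow> nat \<Rightarrow> real \<Rightarrow> bool list" where
  "wd \<theta> m x = map (\<lambda>i. frac (x + real i * \<theta>) \<in> I_b \<theta>) [0..<m]"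

definition Qs :: "real \<Rightarrow> nat list \<Rightarrow> real set" where
  "Qs \<theta> P = {frac (- real (psum P l) * \<theta>) | l. l \<le> length P}"

lemma factor_wd: "factor_at \<theta> m n = wd \<theta> m (frac (real n * \<theta>))"
proof (rule nth_equalityI)
  show "length (factor_at \<theta> m n) = length (wd \<theta> m (frac (real n * \<theta>)))"
    by (simp add: factor_at_def wd_def)
next
  fix i assume "i < length (factor_at \<theta> m n)"
  then have i: "i < m" by (simp add: factor_at_def)
  have "real (n + i) * \<theta> = real n * \<theta> + real i * \<theta>" by (simp add: algebra_simps)
  then show "factor_at \<theta> m n ! i = wd \<theta> m (frac (real n * \<theta>)) ! i"
    using i by (simp add: factor_at_def wd_def sturm_def)
qed

lemma psum_0[simp]: "psum P 0 = 0" by (simp add: psum_def)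

lemma psum_Suc: "l < length P \<Longrightarrow> psum P (Suc l) = psum P l + P ! l"
  by (simp add: psum_def take_Suc_conv_app_nth)

lemma psum_len: "psum P (length P) = sum_list P" by (simp add: psum_def)

lemma psum_mono: "i \<le> j \<Longrightarrow> psum P i \<le> psum P j"
proof -
  assume "i \<le> j"
  then obtain d where "j = i + d" using le_Suc_ex by blast
  then show ?thesis by (simp add: psum_def take_add)
qed

lemma block_wd:
  assumes "l < length P" "sum_list P = m"
  shows "block P (wd \<theta> m x) l = map (\<lambda>i. frac (x + real i * \<theta>) \<in> I_b \<theta>) [psum P l..<psum P (Suc l)]"
proof -
  have le: "psum P l + P ! l \<le> m"
    using psum_mono[of "Suc l" "length P" P] assms by (simp add: psum_Suc psum_len)
  have "take (P ! l) (drop (psum P l) [0..<m]) = [psum P l..<psum P l + P ! l]"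
    using le by (simp add: take_upt)
  then show ?thesis using assms
    by (simp add: block_def wd_def drop_map take_map psum_Suc)
qed

lemma height_block:
  assumes "l < length P" "sum_list P = m" "0 < \<theta>" "\<theta> < 1"
  shows "int (height (block P (wd \<theta> m x) l)) =
     \<lfloor>x + real (psum P (Suc l)) * \<theta>\<rfloor> - \<lfloor>x + real (psum P l) * \<theta>\<rfloor>"
proof -
  have F: "\<lfloor>x + real (Suc i) * \<theta>\<rfloor> = \<lfloor>x + real i * \<theta>\<rfloor> + (if frac (x + real i * \<theta>) \<in> I_b \<theta> then 1 else 0)" for i
  proof -
    have "x + real (Suc i) * \<theta> = (x + real i * \<theta>) + \<theta>" by (simp add: algebra_simps)
    then show ?thesis by (simp only:) (rule floor_step[OF assms(3,4)])
  qed
  have "psum P l \<le> psum P (Suc l)" by (rule psum_mono) simp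
  then show ?thesis unfolding block_wd[OF assms(1,2)]
    by (rule height_tele[where F = "\<lambda>i. \<lfloor>x + real i * \<theta>\<rfloor>", OF F])
qed

lemma prof_eq_D:
  assumes "sum_list P = m" "0 < \<theta>" "\<theta> < 1" "0 \<le> x" "x < 1" "0 \<le> y" "y < 1"
  shows "height_profile P (wd \<theta> m x) = height_profile P (wd \<theta> m y) \<longleftrightarrow>
    (\<forall>l \<le> length P. \<lfloor>x + real (psum P l) * \<theta>\<rfloor> - \<lfloor>y + real (psum P l) * \<theta>\<rfloor> = 0)"
proof -
  define D where "D l = \<lfloor>x + real (psum P l) * \<theta>\<rfloor> - \<lfloor>y + real (psum P l) * \<theta>\<rfloor>" for l
  have "\<lfloor>x\<rfloor> = 0" "\<lfloor>y\<rfloor> = 0" using assms by (simp_all add: floor_eq_iff)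
  then have D0: "D 0 = 0" by (simp add: D_def)
  have "height_profile P (wd \<theta> m x) = height_profile P (wd \<theta> m y) \<longleftrightarrow>
     (\<forall>l < length P. height (block P (wd \<theta> m x) l) = height (block P (wd \<theta> m y) l))"
    by (auto simp add: height_profile_def)
  also have "\<dots> \<longleftrightarrow> (\<forall>l < length P. D (Suc l) = D l)"
  proof -
    have "height (block P (wd \<theta> m x) l) = height (block P (wd \<theta> m y) l) \<longleftrightarrow> D (Suc l) = D l"
      if "l < length P" for l
    proof -
      have "height (block P (wd \<theta> m x) l) = height (block P (wd \<theta> m y) l) \<longleftrightarrow>
         int (height (block P (wd \<theta> m x) l)) = int (height (block P (wd \<theta> m y) l))" by simp
      also have "\<dots> \<longleftrightarrow> D (Suc l) = D l"
        unfolding height_block[OF that assms(1-3)] D_def by linarith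
      finally show ?thesis .
    qed
    then show ?thesis by auto
  qed
  also have "\<dots> \<longleftrightarrow> (\<forall>l \<le> length P. D l = 0)"
  proof
    assume h: "\<forall>l < length P. D (Suc l) = D l"
    have "l \<le> length P \<longrightarrow> D l = 0" for l
      by (induction l) (use h D0 in auto)
    then show "\<forall>l \<le> length P. D l = 0" by blast
  next
    assume "\<forall>l \<le> length P. D l = 0"
    then show "\<forall>l < length P. D (Suc l) = D l" by auto
  qed
  finally show ?thesis unfolding D_def .
qed

lemma prof_eq_Q:
  assumes "\<theta> \<notin> \<rat>" "sum_list P = m" "0 < \<theta>" "\<theta> < 1" "0 \<le> x" "x < 1" "0 \<le> y" "y < 1"
  shows "height_profile P (wd \<theta> m x) = height_profile P (wd \<theta> m y) \<longleftrightarrow>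
    (\<forall>q \<in> Qs \<theta> P. q \<le> x \<longleftrightarrow> q \<le> y)"
proof -
  have one: "\<lfloor>x + real t * \<theta>\<rfloor> - \<lfloor>y + real t * \<theta>\<rfloor> = 0 \<longleftrightarrow>
     (frac (- real t * \<theta>) \<le> x \<longleftrightarrow> frac (- real t * \<theta>) \<le> y)" for t
  proof (cases "t = 0")
    case True
    have "\<lfloor>x\<rfloor> = 0" "\<lfloor>y\<rfloor> = 0" using assms by (simp_all add: floor_eq_iff)
    then show ?thesis using True assms by simp
  next
    case False
    then show ?thesis using floor_shift[OF assms(1), of t x] floor_shift[OF assms(1), of t y] assms
      by simp
  qed
  show ?thesis unfolding prof_eq_D[OF assms(2-8)] one Qs_def by blast
qed

lemma qp_strict:
  assumes "sorted_wrt (<) L" "length L = Suc k" "\<forall>q\<in>set L. q < (1::real)"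
    and "i < j" "j \<le> Suc k"
  shows "(if i < length L then L ! i else 1) < (if j < length L then L ! j else 1)"
proof (cases "j < length L")
  case True
  then show ?thesis using assms sorted_wrt_nth_less[OF assms(1)] by auto
next
  case False
  then have "i < length L" using assms by auto
  then show ?thesis using False assms(3) nth_mem by auto
qed

lemma qp_mono:
  assumes "sorted_wrt (<) L" "length L = Suc k" "\<forall>q\<in>set L. q < (1::real)"
    and "i \<le> j" "j \<le> Suc k"
  shows "(if i < length L then L ! i else 1) \<le> (if j < length L then L ! j else 1)"
  using qp_strict[OF assms(1-3), of i j] assms(4,5) by (cases "i = j") auto

lemma qp_aux:
  assumes "sorted_wrt (<) L" "length L = Suc k" "\<forall>q\<in>set L. q < (1::real)"
    and "j \<le> k" "i \<le> k"
    and "(if j < length L then L ! j else 1) \<le> x" "x < (if Suc j < length L then L ! Suc j else 1)"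
  shows "L ! i \<le> x \<longleftrightarrow> i \<le> j"
proof
  assume "L ! i \<le> x"
  show "i \<le> j"
  proof (rule ccontr)
    assume "\<not> i \<le> j"
    then have "Suc j \<le> i" by simp
    from qp_mono[OF assms(1-3) this] assms have "(if Suc j < length L then L ! Suc j else 1) \<le> L ! i"
      by auto
    with assms(7) \<open>L ! i \<le> x\<close> show False by linarith
  qed
next
  assume "i \<le> j"
  from qp_mono[OF assms(1-3) this] assms have "L ! i \<le> L ! j" by auto
  with assms(6) assms(2,4) show "L ! i \<le> x" by auto
qed

lemma qp_exists:
  assumes "sorted_wrt (<) L" "length L = Suc k" "\<forall>q\<in>set L. q < (1::real)" "L ! 0 = 0"
    and "0 \<le> x" "x < 1"
  shows "\<exists>j \<le> k. (if j < length L then L ! j else 1) \<le> x \<and> x < (if Suc j < length L then L ! Suc j else 1)"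
proof -
  define S where "S = {i. i \<le> k \<and> L ! i \<le> x}"
  have fin: "finite S" unfolding S_def by simp
  have "0 \<in> S" using assms by (simp add: S_def)
  then have ne: "S \<noteq> {}" by auto
  define j where "j = Max S"
  have jS: "j \<in> S" unfolding j_def using fin ne by simp
  have jmax: "i \<in> S \<Longrightarrow> i \<le> j" for i unfolding j_def using fin by simp
  have jk: "j \<le> k" and jx: "L ! j \<le> x" using jS by (auto simp: S_def)
  have "x < (if Suc j < length L then L ! Suc j else 1)"
  proof (cases "Suc j < length L")
    case True
    then have "Suc j \<le> k" using assms by simp
    then have "Suc j \<notin> S \<or> L ! Suc j > x" using jmax[of "Suc j"] by auto
    then show ?thesis using True \<open>Suc j \<le> k\<close> by (auto simp: S_def)
  next
    case False then show ?thesis using assms by simp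
  qed
  then show ?thesis using jk jx assms(2) by (intro exI[of _ j]) auto
qed

lemma qp_cells:
  assumes "sorted_wrt (<) L" "length L = Suc k" "\<forall>q\<in>set L. q < (1::real)"
    and "j \<le> k" "(if j < length L then L ! j else 1) \<le> x" "x < (if Suc j < length L then L ! Suc j else 1)"
    and "j' \<le> k" "(if j' < length L then L ! j' else 1) \<le> y" "y < (if Suc j' < length L then L ! Suc j' else 1)"
  shows "(\<forall>q\<in>set L. q \<le> x \<longleftrightarrow> q \<le> y) \<longleftrightarrow> j = j'"
proof
  assume "j = j'"
  show "\<forall>q\<in>set L. q \<le> x \<longleftrightarrow> q \<le> y"
  proof
    fix q assume "q \<in> set L"
    then obtain i where i: "i < length L" "q = L ! i" by (auto simp: in_set_conv_nth)
    then have "i \<le> k" using assms by simp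
    show "q \<le> x \<longleftrightarrow> q \<le> y"
      using qp_aux[OF assms(1-4) \<open>i \<le> k\<close> assms(5,6)] qp_aux[OF assms(1-3,7) \<open>i \<le> k\<close> assms(8,9)]
        \<open>j = j'\<close> i by simp
  qed
next
  assume h: "\<forall>q\<in>set L. q \<le> x \<longleftrightarrow> q \<le> y"
  have "L ! j \<in> set L" "L ! j' \<in> set L" using assms by auto
  then show "j = j'"
    using h qp_aux[OF assms(1-4) assms(7) assms(5,6)] qp_aux[OF assms(1-3,7) assms(7) assms(8,9)]
      qp_aux[OF assms(1-4) assms(4) assms(5,6)] qp_aux[OF assms(1-3,7) assms(4) assms(8,9)]
    by (metis le_antisym order_refl)
qed

lemma psum_strict:
  assumes "\<forall>p \<in> set P. 0 < p" "l1 < l2" "l2 \<le> length P"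
  shows "psum P l1 < psum P l2"
proof -
  have "l1 < length P" using assms by simp
  then have "psum P (Suc l1) = psum P l1 + P ! l1" by (rule psum_Suc)
  moreover have "P ! l1 > 0" using assms \<open>l1 < length P\<close> nth_mem by blast
  moreover have "psum P (Suc l1) \<le> psum P l2" using assms by (intro psum_mono) simp
  ultimately show ?thesis by simp
qed

lemma Qs_image: "Qs \<theta> P = (\<lambda>l. frac (- real (psum P l) * \<theta>)) ` {..length P}"
  by (auto simp: Qs_def)

lemma Qs_finite: "finite (Qs \<theta> P)" by (simp add: Qs_image)

lemma Qs_inj:
  assumes "\<theta> \<notin> \<rat>" "\<forall>p \<in> set P. 0 < p"
  shows "inj_on (\<lambda>l. frac (- real (psum P l) * \<theta>)) {..length P}"
proof -
  have neq: "frac (- real (psum P a) * \<theta>) \<noteq> frac (- real (psum P b) * \<theta>)"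
    if "a < b" "b \<le> length P" for a b
  proof
    assume "frac (- real (psum P a) * \<theta>) = frac (- real (psum P b) * \<theta>)"
    then have "frac (real (psum P a) * \<theta>) = frac (real (psum P b) * \<theta>)"
      using frac_neg_eq_iff[of "real (psum P a) * \<theta>" "real (psum P b) * \<theta>"] by simp
    then obtain n where n: "real (psum P a) * \<theta> = real (psum P b) * \<theta> + of_int n" by (rule frac_eqE)
    have lt: "psum P a < psum P b" using psum_strict assms that by blast
    then have "real (psum P b - psum P a) * \<theta> = - of_int n" using n by (simp add: of_nat_diff algebra_simps)
    then have "real (psum P b - psum P a) * \<theta> \<in> \<int>" by simp
    moreover have "real (psum P b - psum P a) * \<theta> \<notin> \<int>" using lt by (intro mult_int_irr[OF assms(1)]) simp
    ultimately show False by blast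
  qed
  show ?thesis
  proof (rule inj_onI)
    fix a b assume ab: "a \<in> {..length P}" "b \<in> {..length P}"
      and e: "frac (- real (psum P a) * \<theta>) = frac (- real (psum P b) * \<theta>)"
    show "a = b"
    proof (rule ccontr)
      assume "a \<noteq> b"
      then consider "a < b" | "b < a" by linarith
      then show False using neq[of a b] neq[of b a] ab e by cases auto
    qed
  qed
qed

lemma L_props:
  assumes "\<theta> \<notin> \<rat>" "\<forall>p \<in> set P. 0 < p"
  defines "L \<equiv> sorted_list_of_set (Qs \<theta> P)"
  shows "sorted_wrt (<) L" "set L = Qs \<theta> P" "length L = Suc (length P)"
    "\<forall>q\<in>set L. 0 \<le> q \<and> q < 1" "L ! 0 = 0"
proof -
  show sL: "sorted_wrt (<) L" unfolding L_def by (rule strict_sorted_list_of_set)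
  show setL: "set L = Qs \<theta> P" unfolding L_def using Qs_finite by simp
  show lenL: "length L = Suc (length P)" unfolding L_def
    using card_image[OF Qs_inj[OF assms(1,2)]] by (simp add: Qs_image)
  show rng: "\<forall>q\<in>set L. 0 \<le> q \<and> q < 1" unfolding setL Qs_def using frac_lt_1 by auto
  have "0 \<in> set L" unfolding setL Qs_def by force
  then obtain i where i: "i < length L" "L ! i = 0" by (auto simp: in_set_conv_nth)
  have "L ! 0 \<le> L ! i" using sorted_wrt_nth_less[OF sL, of 0 i] i by (cases "i = 0") auto
  moreover have "0 \<le> L ! 0" using rng lenL by simp
  ultimately show "L ! 0 = 0" using i by simp
qed

lemma qpts_eq: "qpts \<theta> P j = (let L = sorted_list_of_set (Qs \<theta> P) in if j < length L then L ! j else 1)"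
  by (simp add: qpts_def Qs_def)

lemma wd_lex:
  assumes "0 < \<theta>" "\<theta> < 1" "0 \<le> x" "x < y" "y < 1"
  shows "wd \<theta> m x = wd \<theta> m y \<or> lex_less (wd \<theta> m x) (wd \<theta> m y)"
proof (cases "wd \<theta> m x = wd \<theta> m y")
  case True then show ?thesis by simp
next
  case False
  define a where "a z i = (frac (z + real i * \<theta>) \<in> I_b \<theta>)" for z i
  define D where "D i = \<lfloor>y + real i * \<theta>\<rfloor> - \<lfloor>x + real i * \<theta>\<rfloor>" for i
  have step: "\<lfloor>z + real (Suc i) * \<theta>\<rfloor> = \<lfloor>z + real i * \<theta>\<rfloor> + (if a z i then 1 else 0)" for z i
  proof -
    have "z + real (Suc i) * \<theta> = (z + real i * \<theta>) + \<theta>" by (simp add: algebra_simps)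
    then show ?thesis unfolding a_def by (simp only:) (rule floor_step[OF assms(1,2)])
  qed
  have Drange: "0 \<le> D i \<and> D i \<le> 1" for i
  proof -
    have "\<lfloor>x + real i * \<theta>\<rfloor> \<le> \<lfloor>y + real i * \<theta>\<rfloor>" using assms by (intro floor_mono) simp
    moreover have "\<lfloor>y + real i * \<theta>\<rfloor> \<le> \<lfloor>(x + real i * \<theta>) + 1\<rfloor>" using assms by (intro floor_mono) simp
    ultimately show ?thesis unfolding D_def by simp
  qed
  have DSuc: "D (Suc i) = D i + (if a y i then 1 else 0) - (if a x i then 1 else 0)" for i
    unfolding D_def using step[of y i] step[of x i] by simp
  have len: "length (wd \<theta> m x) = m" "length (wd \<theta> m y) = m" by (simp_all add: wd_def)
  have nth: "i < m \<Longrightarrow> wd \<theta> m z ! i = a z i" for z i by (simp add: wd_def a_def)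
  have "\<exists>i0<m. a x i0 \<noteq> a y i0"
  proof (rule ccontr)
    assume "\<not> (\<exists>i0<m. a x i0 \<noteq> a y i0)"
    then have "wd \<theta> m x = wd \<theta> m y" by (intro nth_equalityI) (use len nth in auto)
    with False show False by simp
  qed
  then obtain i0 where "i0 < m" "a x i0 \<noteq> a y i0" by blast
  define i where "i = (LEAST i. i < m \<and> a x i \<noteq> a y i)"
  have im: "i < m" "a x i \<noteq> a y i" unfolding i_def
    using LeastI[of "\<lambda>i. i < m \<and> a x i \<noteq> a y i", OF conjI[OF \<open>i0 < m\<close> \<open>a x i0 \<noteq> a y i0\<close>]] by auto
  have before: "i' < i \<Longrightarrow> a x i' = a y i'" for i'
    using not_less_Least[of i' "\<lambda>i. i < m \<and> a x i \<noteq> a y i"] im(1) unfolding i_def[symmetric] by auto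
  have Dz: "i' \<le> i \<longrightarrow> D i' = 0" for i'
  proof (induction i')
    case 0
    have "\<lfloor>x\<rfloor> = 0" "\<lfloor>y\<rfloor> = 0" using assms by (simp_all add: floor_eq_iff)
    then show ?case by (simp add: D_def)
  next
    case (Suc i') then show ?case using DSuc[of i'] before[of i'] by auto
  qed
  have "D (Suc i) = (if a y i then 1 else 0) - (if a x i then 1 else 0)" using DSuc[of i] Dz[of i] by simp
  then have ax: "\<not> a x i" and ay: "a y i" using Drange[of "Suc i"] im(2) by (auto split: if_splits)
  have "take i (wd \<theta> m x) = take i (wd \<theta> m y)"
    by (rule nth_equalityI) (use im(1) before nth len in auto)
  then have "(wd \<theta> m x, wd \<theta> m y) \<in> lexord {(x, y). x < y}"
    unfolding lexord_take_index_conv using im(1) len nth ax ay by (intro disjI2 exI[of _ i]) auto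
  then show ?thesis by (simp add: lex_less_def)
qed

lemma card_sum: "real (card {n. n < (M::nat) \<and> P n}) = (\<Sum>n<M. if P n then 1 else 0)"
proof (induction M)
  case 0 then show ?case by simp
next
  case (Suc M)
  show ?case
  proof (cases "P M")
    case True
    then have "{n. n < Suc M \<and> P n} = insert M {n. n < M \<and> P n}" by (auto simp: less_Suc_eq)
    then show ?thesis using Suc True by simp
  next
    case False
    then have "{n. n < Suc M \<and> P n} = {n. n < M \<and> P n}" by (auto simp: less_Suc_eq)
    then show ?thesis using Suc False by simp
  qed
qed

lemma shift_bound:
  fixes f :: "nat \<Rightarrow> real"
  assumes "\<And>n. 0 \<le> f n" "\<And>n. f n < 1"
  shows "\<bar>(\<Sum>n<M. f (n + t)) - (\<Sum>n<M. f n)\<bar> \<le> real t"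
proof (induction t)
  case 0 then show ?case by simp
next
  case (Suc t)
  have "(\<Sum>n<M. f (n + Suc t)) - (\<Sum>n<M. f (n + t)) = (\<Sum>n<M. f (Suc n + t) - f (n + t))"
    by (simp add: sum_subtractf)
  also have "\<dots> = f (M + t) - f (0 + t)"
    using sum_lessThan_telescope[of "\<lambda>n. f (n + t)" M] by simp
  finally have "\<bar>(\<Sum>n<M. f (n + Suc t)) - (\<Sum>n<M. f (n + t))\<bar> \<le> 1"
    using assms[of "M + t"] assms[of t] by simp
  with Suc show ?case by simp
qed

lemma cnt_bound:
  "\<bar>real (card {n. n < M \<and> frac (real n * \<theta>) < 1 - frac (real t * \<theta>)}) - real M * (1 - frac (real t * \<theta>))\<bar> \<le> real t"
proof -
  define c where "c = frac (real t * \<theta>)"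
  have ind: "(if frac (real n * \<theta>) < 1 - c then 1 else 0) = 1 - c - frac (real n * \<theta>) + frac (real (n + t) * \<theta>)" for n
  proof -
    have "real (n + t) * \<theta> = real n * \<theta> + real t * \<theta>" by (simp add: algebra_simps)
    then have "frac (real (n + t) * \<theta>) = (if frac (real n * \<theta>) + c < 1 then frac (real n * \<theta>) + c else frac (real n * \<theta>) + c - 1)"
      by (simp add: frac_add c_def)
    then show ?thesis by auto
  qed
  have "real (card {n. n < M \<and> frac (real n * \<theta>) < 1 - c}) = (\<Sum>n<M. 1 - c - frac (real n * \<theta>) + frac (real (n + t) * \<theta>))"
    unfolding card_sum ind ..
  also have "\<dots> = real M * (1 - c) + ((\<Sum>n<M. frac (real (n + t) * \<theta>)) - (\<Sum>n<M. frac (real n * \<theta>)))"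
    by (simp add: sum.distrib sum_subtractf)
  finally have e: "real (card {n. n < M \<and> frac (real n * \<theta>) < 1 - c}) - real M * (1 - c) =
     (\<Sum>n<M. frac (real (n + t) * \<theta>)) - (\<Sum>n<M. frac (real n * \<theta>))" by simp
  show ?thesis unfolding c_def[symmetric] e
    by (rule shift_bound[of "\<lambda>n. frac (real n * \<theta>)"]) (simp_all add: frac_lt_1)
qed

lemma lim_from_bound:
  fixes f :: "nat \<Rightarrow> real"
  assumes "\<And>N. \<bar>f N - real N * L\<bar> \<le> K"
  shows "(\<lambda>N. f N / real N) \<longlonglongrightarrow> L"
proof (rule tendsto_sandwich[of "\<lambda>N. L - K / real N" _ _ "\<lambda>N. L + K / real N"])
  have ev: "eventually (\<lambda>N. N > (0::nat)) sequentially" by (simp add: eventually_gt_at_top)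
  show "eventually (\<lambda>N. L - K / real N \<le> f N / real N) sequentially"
    using ev
  proof eventually_elim
    case (elim N)
    have "real N * L - K \<le> f N" using assms[of N] by linarith
    then have "(real N * L - K) / real N \<le> f N / real N" by (rule divide_right_mono) simp
    moreover have "(real N * L - K) / real N = L - K / real N" using elim by (simp add: field_simps)
    ultimately show ?case by simp
  qed
  show "eventually (\<lambda>N. f N / real N \<le> L + K / real N) sequentially"
    using ev
  proof eventually_elim
    case (elim N)
    have "f N \<le> real N * L + K" using assms[of N] by linarith
    then have "f N / real N \<le> (real N * L + K) / real N" by (rule divide_right_mono) simp
    moreover have "(real N * L + K) / real N = L + K / real N" using elim by (simp add: field_simps)
    ultimately show ?case by simp
  qed
  show "(\<lambda>N. L - K / real N) \<longlonglongrightarrow> L"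
    using tendsto_diff[OF tendsto_const[of L] lim_const_over_n[of K]] by simp
  show "(\<lambda>N. L + K / real N) \<longlonglongrightarrow> L"
    using tendsto_add[OF tendsto_const[of L] lim_const_over_n[of K]] by simp
qed

lemma cnt_Q:
  assumes "\<theta> \<notin> \<rat>" "q \<in> Qs \<theta> P \<or> q = 1"
  shows "\<exists>C. \<forall>M. \<bar>real (card {n. n < M \<and> frac (real n * \<theta>) < q}) - real M * q\<bar> \<le> C"
proof -
  have "q = 0 \<or> (\<exists>t. q = 1 - frac (real t * \<theta>))"
  proof (cases "q = 1")
    case True then show ?thesis by (intro disjI2 exI[of _ 0]) simp
  next
    case False
    then obtain l where q: "q = frac (- real (psum P l) * \<theta>)" using assms by (auto simp: Qs_def)
    show ?thesis
    proof (cases "psum P l = 0")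
      case True then show ?thesis using q by simp
    next
      case F: False
      have "real (psum P l) * \<theta> \<notin> \<int>" using mult_int_irr[OF assms(1)] F by simp
      then have "q = 1 - frac (real (psum P l) * \<theta>)" using q by (simp add: frac_neg)
      then show ?thesis by blast
    qed
  qed
  then show ?thesis
  proof
    assume "q = 0"
    then show ?thesis by (intro exI[of _ 0]) (simp add: not_less)
  next
    assume "\<exists>t. q = 1 - frac (real t * \<theta>)"
    then obtain t where "q = 1 - frac (real t * \<theta>)" by blast
    then show ?thesis using cnt_bound[of _ \<theta> t] by blast
  qed
qed

lemma freq_interval:
  fixes \<theta> a b :: real
  assumes "a \<le> b" "b \<le> 1" "0 \<le> a"
    and Ca: "\<And>M. \<bar>real (card {n. n < M \<and> frac (real n * \<theta>) < a}) - real M * a\<bar> \<le> Ca"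
    and Cb: "\<And>M. \<bar>real (card {n. n < M \<and> frac (real n * \<theta>) < b}) - real M * b\<bar> \<le> Cb"
  shows "(\<lambda>N. real (card {n. n + m \<le> N \<and> frac (real n * \<theta>) \<in> {a..<b}}) / real N) \<longlonglongrightarrow> b - a"
proof (rule lim_from_bound)
  fix N
  define M where "M = Suc N - m"
  have set_eq: "{n. n + m \<le> N \<and> frac (real n * \<theta>) \<in> {a..<b}} = {n. n < M \<and> frac (real n * \<theta>) \<in> {a..<b}}"
    unfolding M_def by auto
  have ind: "(if frac (real n * \<theta>) \<in> {a..<b} then 1 else 0) =
     (if frac (real n * \<theta>) < b then 1 else 0) - (if frac (real n * \<theta>) < a then (1::real) else 0)" for n
    using assms(1) by auto
  have c: "real (card {n. n < M \<and> frac (real n * \<theta>) \<in> {a..<b}}) =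
      real (card {n. n < M \<and> frac (real n * \<theta>) < b}) - real (card {n. n < M \<and> frac (real n * \<theta>) < a})"
    unfolding card_sum ind by (simp add: sum_subtractf)
  have b1: "\<bar>real (card {n. n < M \<and> frac (real n * \<theta>) \<in> {a..<b}}) - real M * (b - a)\<bar> \<le> Ca + Cb"
  proof -
    have e: "real (card {n. n < M \<and> frac (real n * \<theta>) < b}) - real (card {n. n < M \<and> frac (real n * \<theta>) < a}) - real M * (b - a)
      = (real (card {n. n < M \<and> frac (real n * \<theta>) < b}) - real M * b) - (real (card {n. n < M \<and> frac (real n * \<theta>) < a}) - real M * a)"
      by (simp add: algebra_simps)
    show ?thesis unfolding c e using Ca[of M] Cb[of M] abs_triangle_ineq4[of "real (card {n. n < M \<and> frac (real n * \<theta>) < b}) - real M * b" "real (card {n. n < M \<and> frac (real n * \<theta>) < a}) - real M * a"]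
      by linarith
  qed
  have "\<bar>real M - real N\<bar> \<le> real m + 1" unfolding M_def by linarith
  then have "\<bar>real M * (b - a) - real N * (b - a)\<bar> \<le> real m + 1"
  proof -
    have "\<bar>real M * (b - a) - real N * (b - a)\<bar> = \<bar>real M - real N\<bar> * (b - a)"
      using assms(1) by (simp add: left_diff_distrib[symmetric] abs_mult)
    also have "\<dots> \<le> (real m + 1) * 1"
      using \<open>\<bar>real M - real N\<bar> \<le> real m + 1\<close> assms by (intro mult_mono) auto
    finally show ?thesis by simp
  qed
  with b1 show "\<bar>real (card {n. n + m \<le> N \<and> frac (real n * \<theta>) \<in> {a..<b}}) - real N * (b - a)\<bar> \<le> Ca + Cb + (real m + 1)"
    unfolding set_eq by linarith
qed

lemma J_eq:
  assumes "length u = m" "0 < \<theta>" "\<theta> < 1"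
  shows "J \<theta> u = {x \<in> {0..<1}. wd \<theta> m x = u}"
proof -
  have l: "Rot \<theta> i x \<in> I_letter \<theta> b \<longleftrightarrow> (frac (x + real i * \<theta>) \<in> I_b \<theta>) = b" for i x b
    using frac_lt_1[of "x + real i * \<theta>"] frac_ge_0[of "x + real i * \<theta>"]
    by (cases b) (auto simp: Rot_def I_letter_def I_a_def I_b_def)
  have "wd \<theta> m x = u \<longleftrightarrow> (\<forall>i<length u. (frac (x + real i * \<theta>) \<in> I_b \<theta>) = u ! i)" for x
  proof
    assume "wd \<theta> m x = u" then show "\<forall>i<length u. (frac (x + real i * \<theta>) \<in> I_b \<theta>) = u ! i"
      using assms(1) by (auto simp: wd_def)
  next
    assume h: "\<forall>i<length u. (frac (x + real i * \<theta>) \<in> I_b \<theta>) = u ! i"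
    show "wd \<theta> m x = u" by (rule nth_equalityI) (use h assms(1) in \<open>auto simp: wd_def\<close>)
  qed
  then show ?thesis unfolding J_def l by auto
qed

lemma bool_lex_asym: "lex_less u w \<Longrightarrow> \<not> lex_less w u"
proof -
  have "asym {(x::bool, y). x < y}" by (rule asymI) auto
  then show "lex_less u w \<Longrightarrow> \<not> lex_less w u" unfolding lex_less_def
    using lexord_asymmetric by blast
qed

theorem mainTheorem8:
  fixes \<theta> :: real and m k :: nat and P :: "nat list"
    and lam :: "nat \<Rightarrow> bool list set"
  assumes irr: "\<theta> \<notin> \<rat>" and th0: "0 < \<theta>" and th1: "\<theta> < 1"
    and k1: "1 \<le> k" and km: "k \<le> m"
    and lenP: "length P = k" and posP: "\<forall>p \<in> set P. 0 < p" and sumP: "sum_list P = m"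
    and lam_bij: "bij_betw lam {0..k} (varieties \<theta> m P)"
    and lam_ord: "\<forall>i j u w. i < j \<and> j \<le> k \<and> u \<in> lam i \<and> w \<in> lam j \<longrightarrow> lex_less u w"
  shows "\<forall>j \<le> k.
           (\<forall>u \<in> Lang \<theta> m. u \<in> lam j \<longleftrightarrow> J \<theta> u \<subseteq> {qpts \<theta> P j..<qpts \<theta> P (j + 1)})
         \<and> (\<forall>n. factor_at \<theta> m n \<in> lam j \<longleftrightarrow>
                 frac (real n * \<theta>) \<in> {qpts \<theta> P j..<qpts \<theta> P (j + 1)})
         \<and> ((\<lambda>N. real (occ_count \<theta> m (lam j) N) / real N)
              \<longlonglongrightarrow> qpts \<theta> P (j + 1) - qpts \<theta> P j)"
proof -
  define L where "L = sorted_list_of_set (Qs \<theta> P)"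
  have sL: "sorted_wrt (<) L" and setL: "set L = Qs \<theta> P" and lenL: "length L = Suc k"
    and rngL: "\<forall>q\<in>set L. 0 \<le> q \<and> q < 1" and L0: "L ! 0 = 0"
    using L_props[OF irr posP] lenP unfolding L_def by auto
  have rngL1: "\<forall>q\<in>set L. q < 1" using rngL by auto
  have qpL: "qpts \<theta> P j = (if j < length L then L ! j else 1)" for j
    unfolding qpts_eq L_def by (simp add: Let_def)
  define cell where "cell j x \<longleftrightarrow> qpts \<theta> P j \<le> x \<and> x < qpts \<theta> P (Suc j)" for j x
  define xs where "xs n = frac (real n * \<theta>)" for n
  have xs01: "0 \<le> xs n" "xs n < 1" for n by (simp_all add: xs_def frac_lt_1)
  have fw: "factor_at \<theta> m n = wd \<theta> m (xs n)" for n by (simp add: xs_def factor_wd)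
  have cellEx: "\<exists>j \<le> k. cell j x" if "0 \<le> x" "x < 1" for x
    using qp_exists[OF sL lenL rngL1 L0 that] unfolding cell_def qpL by simp
  have cellEq: "height_profile P (wd \<theta> m x) = height_profile P (wd \<theta> m y) \<longleftrightarrow> j = j'"
    if "0 \<le> x" "x < 1" "0 \<le> y" "y < 1" "j \<le> k" "j' \<le> k" "cell j x" "cell j' y" for x y j j'
  proof -
    have "height_profile P (wd \<theta> m x) = height_profile P (wd \<theta> m y) \<longleftrightarrow> (\<forall>q \<in> set L. q \<le> x \<longleftrightarrow> q \<le> y)"
      unfolding setL by (rule prof_eq_Q[OF irr sumP th0 th1 that(1-4)])
    also have "\<dots> \<longleftrightarrow> j = j'"
      using that(7,8) unfolding cell_def qpL
      by (intro qp_cells[OF sL lenL rngL1 that(5) _ _ that(6)]) auto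
    finally show ?thesis .
  qed
  have qmono: "i \<le> j \<Longrightarrow> j \<le> Suc k \<Longrightarrow> qpts \<theta> P i \<le> qpts \<theta> P j" for i j
    unfolding qpL by (rule qp_mono[OF sL lenL rngL1])
  have qstrict: "i < j \<Longrightarrow> j \<le> Suc k \<Longrightarrow> qpts \<theta> P i < qpts \<theta> P j" for i j
    unfolding qpL by (rule qp_strict[OF sL lenL rngL1])
  have q01: "0 \<le> qpts \<theta> P j \<and> qpts \<theta> P j \<le> 1" for j
    unfolding qpL using rngL lenL by (auto simp: nth_mem less_imp_le)
  have cellOrd: "x < y" if "i < j" "j \<le> k" "cell i x" "cell j y" for i j x y
  proof -
    have "qpts \<theta> P (Suc i) \<le> qpts \<theta> P j" using that by (intro qmono) auto
    then show ?thesis using that(3,4) unfolding cell_def by linarith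
  qed
  have inQ: "qpts \<theta> P i \<in> Qs \<theta> P \<or> qpts \<theta> P i = 1" for i
  proof (cases "i < length L")
    case True
    then have "L ! i \<in> set L" by (rule nth_mem)
    then show ?thesis unfolding qpL using True setL by simp
  qed (simp add: qpL)
  have freq: "(\<lambda>N. real (card {n. n + m \<le> N \<and> frac (real n * \<theta>) \<in> {qpts \<theta> P j..<qpts \<theta> P (Suc j)}}) / real N)
       \<longlonglongrightarrow> qpts \<theta> P (Suc j) - qpts \<theta> P j" if jk: "j \<le> k" for j
  proof -
    obtain Ca where Ca: "\<And>M. \<bar>real (card {n. n < M \<and> frac (real n * \<theta>) < qpts \<theta> P j}) - real M * qpts \<theta> P j\<bar> \<le> Ca"
      using cnt_Q[OF irr inQ[of j]] by blast
    obtain Cb where Cb: "\<And>M. \<bar>real (card {n. n < M \<and> frac (real n * \<theta>) < qpts \<theta> P (Suc j)}) - real M * qpts \<theta> P (Suc j)\<bar> \<le> Cb"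
      using cnt_Q[OF irr inQ[of "Suc j"]] by blast
    have m1: "qpts \<theta> P j \<le> qpts \<theta> P (Suc j)" using jk by (intro qmono) auto
    have m2: "qpts \<theta> P (Suc j) \<le> 1" "0 \<le> qpts \<theta> P j" using q01[of "Suc j"] q01[of j] by auto
    show ?thesis by (rule freq_interval[OF m1 m2 Ca Cb])
  qed
  have cellNE: "\<exists>n. cell j (xs n)" if "j \<le> k" for j
  proof (rule ccontr)
    assume "\<nexists>n. cell j (xs n)"
    then have e: "{n. n + m \<le> N \<and> frac (real n * \<theta>) \<in> {qpts \<theta> P j..<qpts \<theta> P (Suc j)}} = {}" for N
      by (auto simp: cell_def xs_def)
    have "(\<lambda>N. 0::real) \<longlonglongrightarrow> qpts \<theta> P (Suc j) - qpts \<theta> P j" using freq[OF that] unfolding e by simp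
    then have "qpts \<theta> P (Suc j) - qpts \<theta> P j = 0" using LIMSEQ_unique tendsto_const by blast
    moreover have "qpts \<theta> P j < qpts \<theta> P (Suc j)" using that by (intro qstrict) auto
    ultimately show False by simp
  qed
  define V where "V j = {factor_at \<theta> m n | n. cell j (xs n)}" for j
  have Vchar: "factor_at \<theta> m n \<in> V j \<longleftrightarrow> cell j (xs n)" if "j \<le> k" for n j
  proof
    assume "factor_at \<theta> m n \<in> V j"
    then obtain n' where e: "factor_at \<theta> m n = factor_at \<theta> m n'" "cell j (xs n')" by (auto simp: V_def)
    obtain j'' where j'': "j'' \<le> k" "cell j'' (xs n)" using cellEx[OF xs01] by blast
    have "j'' = j" using cellEq[OF xs01 xs01 j''(1) that j''(2) e(2)] e(1) by (simp add: fw)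
    then show "cell j (xs n)" using j'' by simp
  qed (auto simp: V_def)
  have VLang: "V j \<subseteq> Lang \<theta> m" for j by (auto simp: V_def Lang_def)
  have Vne: "V j \<noteq> {}" if "j \<le> k" for j using cellNE[OF that] by (auto simp: V_def)
  have Vclass: "{u \<in> Lang \<theta> m. height_profile P u = height_profile P (factor_at \<theta> m n)} = V j"
    if "j \<le> k" "cell j (xs n)" for j n
  proof -
    have "u \<in> V j" if uL: "u \<in> Lang \<theta> m" and hu: "height_profile P u = height_profile P (factor_at \<theta> m n)" for u
    proof -
      obtain n' where u: "u = factor_at \<theta> m n'" using uL by (auto simp: Lang_def)
      obtain j' where j': "j' \<le> k" "cell j' (xs n')" using cellEx[OF xs01] by blast
      have "j' = j" using cellEq[OF xs01 xs01 j'(1) \<open>j \<le> k\<close> j'(2) \<open>cell j (xs n)\<close>] hu u by (simp add: fw)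
      then show ?thesis using u j' Vchar[OF \<open>j \<le> k\<close>] by simp
    qed
    moreover have "height_profile P u = height_profile P (factor_at \<theta> m n)" if uV: "u \<in> V j" for u
    proof -
      obtain n' where u: "u = factor_at \<theta> m n'" "cell j (xs n')" using uV by (auto simp: V_def)
      show ?thesis using cellEq[OF xs01 xs01 \<open>j \<le> k\<close> \<open>j \<le> k\<close> u(2) \<open>cell j (xs n)\<close>] u(1) by (simp add: fw)
    qed
    ultimately show ?thesis using VLang by blast
  qed
  have var_eq: "varieties \<theta> m P = V ` {0..k}"
  proof
    show "varieties \<theta> m P \<subseteq> V ` {0..k}"
    proof
      fix S assume "S \<in> varieties \<theta> m P"
      then obtain n where S: "S = {u \<in> Lang \<theta> m. height_profile P u = height_profile P (factor_at \<theta> m n)}"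
        by (auto simp: varieties_def Lang_def)
      obtain j where "j \<le> k" "cell j (xs n)" using cellEx[OF xs01] by blast
      then show "S \<in> V ` {0..k}" using S Vclass by auto
    qed
  next
    show "V ` {0..k} \<subseteq> varieties \<theta> m P"
    proof
      fix S assume "S \<in> V ` {0..k}"
      then obtain j where j: "j \<le> k" "S = V j" by auto
      obtain n where "cell j (xs n)" using cellNE[OF j(1)] by blast
      then have "S = {u \<in> Lang \<theta> m. height_profile P u = height_profile P (factor_at \<theta> m n)}"
        using Vclass j by auto
      moreover have "factor_at \<theta> m n \<in> Lang \<theta> m" by (auto simp: Lang_def)
      ultimately show "S \<in> varieties \<theta> m P" unfolding varieties_def by blast
    qed
  qed
  have Vinj: "V i = V j \<Longrightarrow> i \<le> k \<Longrightarrow> j \<le> k \<Longrightarrow> i = j" for i j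
  proof -
    assume h: "V i = V j" "i \<le> k" "j \<le> k"
    obtain n where n: "cell i (xs n)" using cellNE[OF h(2)] by blast
    then have cj: "cell j (xs n)" using Vchar[OF h(2), of n] Vchar[OF h(3), of n] h(1) by simp
    then show "i = j" using cellEq[OF xs01 xs01 h(2) h(3) n cj] by simp
  qed
  have Vord: "lex_less u w" if that: "i < j" "j \<le> k" and uV: "u \<in> V i" and wV: "w \<in> V j" for i j u w
  proof -
    obtain n where u: "u = factor_at \<theta> m n" "cell i (xs n)" using uV by (auto simp: V_def)
    obtain n' where w: "w = factor_at \<theta> m n'" "cell j (xs n')" using wV by (auto simp: V_def)
    have lt: "xs n < xs n'" using cellOrd[OF that(1,2) u(2) w(2)] .
    have "u \<noteq> w"
    proof
      assume "u = w"
      then have "i = j" using cellEq[OF xs01 xs01 _ that(2) u(2) w(2)] that u w by (simp add: fw)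
      then show False using that by simp
    qed
    then show ?thesis using wd_lex[OF th0 th1 xs01(1) lt xs01(2), of m] u w by (simp add: fw)
  qed
  have lam_inj: "inj_on lam {0..k}" using lam_bij by (simp add: bij_betw_def)
  have lam_img: "lam ` {0..k} = V ` {0..k}" using lam_bij var_eq by (simp add: bij_betw_def)
  have lamV: "j \<le> k \<longrightarrow> lam j = V j" for j
  proof (induction j rule: less_induct)
    case (less j)
    show ?case
    proof
      assume jk: "j \<le> k"
      have "lam j \<in> V ` {0..k}" using lam_img[symmetric] jk by simp
      then obtain t where t: "t \<le> k" "lam j = V t" by auto
      consider "t < j" | "t = j" | "j < t" by linarith
      then show "lam j = V j"
      proof cases
        case 1
        then have "lam t = V t" using less t by auto
        then have "lam t = lam j" using t by simp
        then have "t = j" using inj_onD[OF lam_inj] t jk by simp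
        then show ?thesis using 1 by simp
      next
        case 2 then show ?thesis using t by simp
      next
        case 3
        have "V j \<in> lam ` {0..k}" using lam_img jk by simp
        then obtain s where s: "s \<le> k" "V j = lam s" by auto
        consider "s < j" | "s = j" | "j < s" by linarith
        then show ?thesis
        proof cases
          case 1
          then have "lam s = V s" using less s by auto
          then have "s = j" using Vinj s jk by auto
          then show ?thesis using 1 by simp
        next
          case 2 then show ?thesis using s by simp
        next
          case js: 3
          obtain u where u: "u \<in> V t" using Vne[OF t(1)] by blast
          obtain w where w: "w \<in> V j" using Vne[OF jk] by blast
          have "u \<in> lam j" using t u by simp
          moreover have "w \<in> lam s" using s w by simp
          ultimately have "lex_less u w" using lam_ord js s(1) by blast
          moreover have "lex_less w u" using Vord[OF 3 t(1) w u] .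
          ultimately show ?thesis using bool_lex_asym by blast
        qed
      qed
    qed
  qed
  show ?thesis
  proof (intro allI impI conjI)
    fix j assume jk: "j \<le> k"
    have lj: "lam j = V j" using lamV jk by blast
    have cellI: "x \<in> {qpts \<theta> P j..<qpts \<theta> P (j + 1)} \<longleftrightarrow> cell j x" for x by (simp add: cell_def)
    show "\<forall>u\<in>Lang \<theta> m. (u \<in> lam j) = (J \<theta> u \<subseteq> {qpts \<theta> P j..<qpts \<theta> P (j + 1)})"
    proof
      fix u assume "u \<in> Lang \<theta> m"
      then obtain n where u: "u = factor_at \<theta> m n" by (auto simp: Lang_def)
      have Ju: "J \<theta> u = {x \<in> {0..<1}. wd \<theta> m x = u}"
        using J_eq[of u m \<theta>] th0 th1 u by (simp add: factor_at_def)
      show "(u \<in> lam j) = (J \<theta> u \<subseteq> {qpts \<theta> P j..<qpts \<theta> P (j + 1)})"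
      proof
        assume "u \<in> lam j"
        then have cn: "cell j (xs n)" using lj Vchar[OF jk] u by simp
        show "J \<theta> u \<subseteq> {qpts \<theta> P j..<qpts \<theta> P (j + 1)}"
        proof
          fix x assume "x \<in> J \<theta> u"
          then have x: "0 \<le> x" "x < 1" "wd \<theta> m x = u" using Ju by auto
          obtain j' where j': "j' \<le> k" "cell j' x" using cellEx[OF x(1,2)] by blast
          have "j' = j" using cellEq[OF x(1,2) xs01 j'(1) jk j'(2) cn] x(3) u by (simp add: fw)
          then show "x \<in> {qpts \<theta> P j..<qpts \<theta> P (j + 1)}" using j' cellI by simp
        qed
      next
        assume "J \<theta> u \<subseteq> {qpts \<theta> P j..<qpts \<theta> P (j + 1)}"
        moreover have "xs n \<in> J \<theta> u" using Ju xs01 u fw by simp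
        ultimately have "cell j (xs n)" using cellI by blast
        then show "u \<in> lam j" using lj Vchar[OF jk] u by simp
      qed
    qed
    show "(factor_at \<theta> m n \<in> lam j) = (frac (real n * \<theta>) \<in> {qpts \<theta> P j..<qpts \<theta> P (j + 1)})" for n
      using lj Vchar[OF jk] cellI by (simp add: xs_def)
    have occ: "occ_count \<theta> m (lam j) N =
        card {n. n + m \<le> N \<and> frac (real n * \<theta>) \<in> {qpts \<theta> P j..<qpts \<theta> P (Suc j)}}" for N
      unfolding occ_count_def using lj Vchar[OF jk] by (simp add: cell_def xs_def)
    have "(\<lambda>N. real (card {n. n + m \<le> N \<and> frac (real n * \<theta>) \<in> {qpts \<theta> P j..<qpts \<theta> P (Suc j)}}) / real N)
       \<longlonglongrightarrow> qpts \<theta> P (Suc j) - qpts \<theta> P j" by (rule freq[OF jk])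
    then show "(\<lambda>N. real (occ_count \<theta> m (lam j) N) / real N) \<longlonglongrightarrow> qpts \<theta> P (j + 1) - qpts \<theta> P j"
      unfolding occ by simp
  qed
qed

end
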